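(* Under Assumption A6, let $P^*$ be the constructed probability measure on $(X^*,Y^*(0))$. Then $P^*(X^*\le0)=P(X=0)$ and, for every $y\in\mathbb R$, $$P^*\big(Y^*(0)\le y\mid X^*\le0\big)=P\big(Y\le y\mid X=0\big);$$ that is, the distribution of $Y^*(0)$ given $X^*\le0$ under $P^*$ equals the distribution of $Y$ given $X=0$ under $P$.
   Context: Setting: a probability measure $P$ under which $X\ge0$ is a real random variable with $P(X=0)>0$ having a density $f_X$ on $(0,\infty)$, $Y(0)$ is a real random variable with $E|Y(0)|<\infty$ (the potential outcome at the bunching point $0$), and the observed outcome satisfies $Y=Y(0)$ on $\{X=0\}$. $Q_{Y(0)\mid X=x}(e):=\inf\{y:P(Y(0)\le y\mid X=x)\ge e\}$ and $F_{Y(0)}$ is the CDF of $Y(0)$. Assumption A6: there are functions $s:(0,\infty)\to\mathbb R$ and $\phi:(0,1)\to\mathbb R$ such that (i) $Q_{Y(0)\mid X=x}(e)=s(x)+\phi(e)$ for all $x>0$, $e\in(0,1)$; (ii) $s$ is real analytic on $(0,\infty)$ and extends to a real analytic function $s^*:\mathbb R\to\mathbb R$; (iii) $\phi$ is strictly increasing, and, writing $G(t):=\mathrm{Leb}\{e\in(0,1):\phi(e)\le t\}$ (the generalized inverse $\phi^{-1}$), there is a continuous $h:\mathbb R\to[0,\infty)$ with $h=f_X$ on $(0,\infty)$ such that $\int_{-\infty}^{\infty}G(y-s^*(x))\,h(x)\,dx=F_{Y(0)}(y)$ for all $y\in\mathbb R$. Construction of $P^*$: under $P^*$, $X^*$ has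 CDF $F^*(x)=\int_{-\infty}^x h(t)\,dt$ for $x<0$ and $F^*(x)=P(X\le x)$ for $x\ge0$, and the conditional distribution of $Y^*(0)$ given $X^*=x$ has quantile function $e\mapsto s^*(x)+\phi(e)$, $e\in(0,1)$ (equivalently conditional CDF $y\mapsto G(y-s^*(x))$). *)

theory Defs
  imports "HOL-Probability.Probability"
begin

definition real_analytic_on :: "(real \<Rightarrow> real) \<Rightarrow> real set \<Rightarrow> bool" where
  "real_analytic_on f S \<longleftrightarrow>
     (\<forall>x\<in>S. \<exists>r>0. \<exists>a::nat \<Rightarrow> real.
        \<forall>y. \<bar>y - x\<bar> < r \<longrightarrow> (\<lambda>n. a n * (y - x) ^ n) sums f y)"

definition is_cdf :: "(real \<Rightarrow> real) \<Rightarrow> bool" where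
  "is_cdf F \<longleftrightarrow> mono F \<and> (\<forall>x. continuous (at_right x) F)
     \<and> (F \<longlongrightarrow> 0) at_bot \<and> (F \<longlongrightarrow> 1) at_top"

definition quantile :: "(real \<Rightarrow> real) \<Rightarrow> real \<Rightarrow> real" where
  "quantile F e = Inf {y. e \<le> F y}"

definition genInv :: "(real \<Rightarrow> real) \<Rightarrow> real \<Rightarrow> real" where
  "genInv \<phi> t = measure lborel {e \<in> {0<..<1}. \<phi> e \<le> t}"

end

theory Submission
  imports Defs
begin

lemma gi_set_borel:
  fixes \<phi> :: "real \<Rightarrow> real"
  assumes "strict_mono_on {0<..<1} \<phi>"
  shows "{e \<in> {0<..<1::real}. \<phi> e \<le> t} \<in> sets borel"
proof (rule real_interval_borel_measurable)
  show "is_interval {e \<in> {0<..<1::real}. \<phi> e \<le> t}"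
  unfolding is_interval_1
  proof (intro ballI allI impI, elim conjE)
  fix a b x assume a: "a \<in> {e \<in> {0<..<1::real}. \<phi> e \<le> t}" and b: "b \<in> {e \<in> {0<..<1::real}. \<phi> e \<le> t}"
    and "a \<le> x" "x \<le> b"
  then have x: "x \<in> {0<..<1}" by auto
  have "\<phi> x \<le> \<phi> b"
  proof (cases "x = b")
    case False
    with \<open>x \<le> b\<close> have "x < b" by simp
    then have "\<phi> x < \<phi> b" using assms x b unfolding strict_mono_on_def by blast
    then show ?thesis by simp
  qed simp
  then show "x \<in> {e \<in> {0<..<1::real}. \<phi> e \<le> t}" using b x by auto
  qed
qed

lemma gi_set_fin:
  fixes \<phi> :: "real \<Rightarrow> real"
  shows   "emeasure lborel {e \<in> {0<..<1::real}. \<phi> e \<le> t} \<le> 1"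
proof -
  have "emeasure lborel {e \<in> {0<..<1::real}. \<phi> e \<le> t} \<le> emeasure lborel {0<..<1::real}"
    by (rule emeasure_mono) auto
  then show ?thesis by simp
qed

lemma gi_emeasure:
  assumes "strict_mono_on {0<..<1} \<phi>"
  shows "emeasure lborel {e \<in> {0<..<1::real}. \<phi> e \<le> t} = ennreal (genInv \<phi> t)"
  unfolding genInv_def
  by (rule emeasure_eq_ennreal_measure) (use gi_set_fin[of \<phi> t] in \<open>auto simp: top_unique\<close>)

lemma gi_bounds:
  assumes "strict_mono_on {0<..<1} \<phi>"
  shows "0 \<le> genInv \<phi> t" "genInv \<phi> t \<le> 1"
  using gi_emeasure[OF assms, of t] gi_set_fin[of \<phi> t]
  by (auto simp: genInv_def)

lemma gi_mono:
  assumes "strict_mono_on {0<..<1} \<phi>"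
  shows "mono (genInv \<phi>)"
proof
  fix t t' :: real assume "t \<le> t'"
  have "emeasure lborel {e \<in> {0<..<1::real}. \<phi> e \<le> t} \<le> emeasure lborel {e \<in> {0<..<1::real}. \<phi> e \<le> t'}"
    by (rule emeasure_mono) (use \<open>t \<le> t'\<close> gi_set_borel[OF assms] in auto)
  then show "genInv \<phi> t \<le> genInv \<phi> t'"
    using gi_emeasure[OF assms] gi_bounds[OF assms] by simp
qed

lemma gi_SUP:
  assumes "strict_mono_on {0<..<1} \<phi>"
  shows "(SUP n. ennreal (genInv \<phi> (real n - c))) = 1"
proof -
  let ?A = "\<lambda>n::nat. {e \<in> {0<..<1::real}. \<phi> e \<le> real n - c}"
  have "(SUP n. emeasure lborel (?A n)) = emeasure lborel (\<Union>i. ?A i)"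
    by (rule SUP_emeasure_incseq) (use gi_set_borel[OF assms] in \<open>auto simp: incseq_def\<close>)
  moreover have "(\<Union>i. ?A i) = {0<..<1}"
  proof safe
    fix e :: real assume "e \<in> {0<..<1}"
    obtain n :: nat where "\<phi> e + c < real n" using reals_Archimedean2 by blast
    then show "e \<in> (\<Union>i. ?A i)" using \<open>e \<in> _\<close> by (auto intro!: exI[of _ n])
  qed
  ultimately show ?thesis using gi_emeasure[OF assms] by simp
qed

lemma cdf_bounds:
  assumes "is_cdf F"
  shows "0 \<le> F y" "F y \<le> 1"
proof -
  from assms have m: "mono F" and t0: "(F \<longlongrightarrow> 0) at_bot" and t1: "(F \<longlongrightarrow> 1) at_top"
    by (auto simp: is_cdf_def)
  show "0 \<le> F y"
    by (rule tendsto_upperbound[OF t0]) (auto simp: eventually_at_bot_linorder intro!: exI[of _ y] monoD[OF m])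
  show "F y \<le> 1"
    by (rule tendsto_lowerbound[OF t1]) (auto simp: eventually_at_top_linorder intro!: exI[of _ y] monoD[OF m])
qed

lemma quantile_le_iff:
  assumes "is_cdf F" "0 < e" "e < 1"
  shows "quantile F e \<le> y \<longleftrightarrow> e \<le> F y"
proof -
  from assms have m: "mono F" and rc: "\<And>x. continuous (at_right x) F"
    and t0: "(F \<longlongrightarrow> 0) at_bot" and t1: "(F \<longlongrightarrow> 1) at_top"
    by (auto simp: is_cdf_def)
  let ?S = "{z. e \<le> F z}"
  have "eventually (\<lambda>z. F z < e) at_bot"
    using order_tendstoD(2)[OF t0 \<open>0 < e\<close>] .
  then obtain z0 where z0: "\<And>z. z \<le> z0 \<Longrightarrow> F z < e" by (auto simp: eventually_at_bot_linorder)
  have bdd: "bdd_below ?S"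
  proof (rule bdd_belowI[of _ z0])
    fix z assume "z \<in> ?S"
    then show "z0 \<le> z" using z0[of z] by (cases "z \<le> z0") auto
  qed
  have "eventually (\<lambda>z. e < F z) at_top"
    using order_tendstoD(1)[OF t1 \<open>e < 1\<close>] .
  then obtain z1 where z1: "\<And>z. z \<ge> z1 \<Longrightarrow> e < F z" by (auto simp: eventually_at_top_linorder)
  have ne: "?S \<noteq> {}" using z1[of z1] less_imp_le by blast
  let ?q = "Inf ?S"
  have qS: "e \<le> F ?q"
  proof (rule tendsto_lowerbound[OF rc[of ?q, unfolded continuous_within]])
    show "at_right ?q \<noteq> bot" by simp
    show "\<forall>\<^sub>F x in at_right ?q. e \<le> F x"
    proof (rule eventually_mono[OF eventually_at_right_less])
      fix z assume "?q < z"
      then obtain w where "w \<in> ?S" "w < z" using cInf_less_iff[OF ne bdd] by blast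
      then show "e \<le> F z" using monoD[OF m, of w z] by auto
    qed
  qed
  show ?thesis
  proof
    assume "quantile F e \<le> y"
    then have "?q \<le> y" by (simp add: quantile_def)
    then show "e \<le> F y" using qS monoD[OF m, of ?q y] by auto
  next
    assume "e \<le> F y"
    then show "quantile F e \<le> y" unfolding quantile_def by (intro cInf_lower bdd) auto
  qed
qed

lemma analytic_isCont:
  assumes "real_analytic_on f UNIV"
  shows "isCont f x"
proof -
  obtain r a where r: "r > 0" and a: "\<And>y. \<bar>y - x\<bar> < r \<Longrightarrow> (\<lambda>n. a n * (y - x) ^ n) sums f y"
    using assms unfolding real_analytic_on_def by blast
  have "(\<lambda>n. a n * ((x + r/2) - x) ^ n) sums f (x + r/2)" using r by (intro a) auto
  then have sm: "summable (\<lambda>n. a n * (r/2) ^ n)" by (simp add: sums_iff)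
  have c0: "isCont (\<lambda>z. \<Sum>n. a n * z ^ n) (x - x)"
    by (rule isCont_powser[OF sm]) (use r in simp)
  have "isCont (\<lambda>y. y - x) x" by simp
  from isCont_o2[OF this c0] have c1: "isCont (\<lambda>y. \<Sum>n. a n * (y - x) ^ n) x" .
  show ?thesis
  proof (rule continuous_transform_within[OF c1 r])
    fix y assume "dist y x < r"
    then show "(\<Sum>n. a n * (y - x) ^ n) = f y"
      using a[of y] by (simp add: dist_real_def sums_iff)
  qed simp
qed

lemma Fc_eq:
  fixes \<phi> :: "real \<Rightarrow> real"
  assumes F: "is_cdf F" and q: "\<forall>e\<in>{0<..<1}. quantile F e = s0 + \<phi> e"
  shows "F y = genInv \<phi> (y - s0)"
proof -
  have "{e \<in> {0<..<1::real}. \<phi> e \<le> y - s0} = {e \<in> {0<..<1}. e \<le> F y}"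
  proof safe
    fix e :: real assume "e \<in> {0<..<1}" "\<phi> e \<le> y - s0"
    then show "e \<le> F y" using q quantile_le_iff[OF F, of e y] by auto
  next
    fix e :: real assume "e \<in> {0<..<1}" "e \<le> F y"
    then show "\<phi> e \<le> y - s0" using q quantile_le_iff[OF F, of e y] by auto
  qed
  moreover have "measure lborel {e \<in> {0<..<1::real}. e \<le> F y} = F y"
  proof (cases "F y < 1")
    case True
    then have "{e \<in> {0<..<1::real}. e \<le> F y} = {0<..F y}" by auto
    then show ?thesis using cdf_bounds[OF F, of y] by simp
  next
    case False
    then have "{e \<in> {0<..<1::real}. e \<le> F y} = {0<..<1}" using cdf_bounds[OF F, of y] by auto
    then show ?thesis using cdf_bounds[OF F, of y] False by simp
  qed
  ultimately show ?thesis unfolding genInv_def by simp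
qed

lemma sets_borel_atMost: "sets (borel :: real measure) = sigma_sets UNIV (range atMost)"
  by (subst borel_eq_atMost) (simp add: sets_measure_of)

theorem propositionB7:
  fixes M :: "'a measure" and X Y Y0 :: "'a \<Rightarrow> real"
    and fX :: "real \<Rightarrow> real"
    and Fc :: "real \<Rightarrow> real \<Rightarrow> real"
    and s sstar \<phi> h :: "real \<Rightarrow> real"
    and Ms :: "'b measure" and Xs Ys :: "'b \<Rightarrow> real"
  assumes P: "prob_space M"
    and X_rv: "X \<in> borel_measurable M" and Y_rv: "Y \<in> borel_measurable M"
    and Y0_rv: "Y0 \<in> borel_measurable M"
    and X_nonneg: "\<forall>\<omega>\<in>space M. X \<omega> \<ge> 0"
    and atom_pos: "measure M {\<omega>\<in>space M. X \<omega> = 0} > 0"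
    and fX_nonneg: "\<forall>x>0. fX x \<ge> 0"
    and density: "\<forall>A\<in>sets borel. A \<subseteq> {0<..} \<longrightarrow>
        emeasure M {\<omega>\<in>space M. X \<omega> \<in> A} = (\<integral>\<^sup>+ x\<in>A. ennreal (fX x) \<partial>lborel)"
    and Y0_int: "integrable M Y0"
    and Y_obs: "\<forall>\<omega>\<in>space M. X \<omega> = 0 \<longrightarrow> Y \<omega> = Y0 \<omega>"
    \<comment> \<open>conditional CDF of Y(0) given X = x, for x > 0 (a version of the conditional law)\<close>
    and Fc_cdf: "\<forall>x>0. is_cdf (Fc x)"
    and Fc_meas: "\<forall>y. (\<lambda>x. Fc x y) \<in> borel_measurable borel"
    and Fc_cond: "\<forall>A\<in>sets borel. \<forall>y. A \<subseteq> {0<..} \<longrightarrow>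
        emeasure M {\<omega>\<in>space M. X \<omega> \<in> A \<and> Y0 \<omega> \<le> y}
          = (\<integral>\<^sup>+ x\<in>A. ennreal (Fc x y * fX x) \<partial>lborel)"
    \<comment> \<open>Assumption A6 (i)\<close>
    and A6_i: "\<forall>x>0. \<forall>e\<in>{0<..<1}. quantile (Fc x) e = s x + \<phi> e"
    \<comment> \<open>Assumption A6 (ii)\<close>
    and A6_ii_s: "real_analytic_on s {0<..}"
    and A6_ii_ext: "real_analytic_on sstar UNIV" and A6_ii_eq: "\<forall>x>0. sstar x = s x"
    \<comment> \<open>Assumption A6 (iii)\<close>
    and A6_iii_mono: "strict_mono_on {0<..<1} \<phi>"
    and h_cont: "continuous_on UNIV h" and h_nonneg: "\<forall>x. h x \<ge> 0"
    and h_fX: "\<forall>x>0. h x = fX x"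
    and A6_iii: "\<forall>y. (\<integral>\<^sup>+ x. ennreal (genInv \<phi> (y - sstar x) * h x) \<partial>lborel)
                   = ennreal (measure M {\<omega>\<in>space M. Y0 \<omega> \<le> y})"
    \<comment> \<open>the constructed P*: law of X* and conditional law of Y*(0) given X*\<close>
    and Ps: "prob_space Ms"
    and Xs_rv: "Xs \<in> borel_measurable Ms" and Ys_rv: "Ys \<in> borel_measurable Ms"
    and Xs_cdf_neg: "\<forall>x<0. emeasure Ms {\<omega>\<in>space Ms. Xs \<omega> \<le> x}
                       = (\<integral>\<^sup>+ t\<in>{..x}. ennreal (h t) \<partial>lborel)"
    and Xs_cdf_nonneg: "\<forall>x\<ge>0. measure Ms {\<omega>\<in>space Ms. Xs \<omega> \<le> x}
                       = measure M {\<omega>\<in>space M. X \<omega> \<le> x}"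
    and Ys_cond: "\<forall>A\<in>sets borel. \<forall>y.
        emeasure Ms {\<omega>\<in>space Ms. Xs \<omega> \<in> A \<and> Ys \<omega> \<le> y}
          = (\<integral>\<^sup>+ x\<in>A. ennreal (genInv \<phi> (y - sstar x)) \<partial>(distr Ms borel Xs))"
  shows "measure Ms {\<omega>\<in>space Ms. Xs \<omega> \<le> 0} = measure M {\<omega>\<in>space M. X \<omega> = 0}
    \<and> (\<forall>y. measure Ms {\<omega>\<in>space Ms. Ys \<omega> \<le> y \<and> Xs \<omega> \<le> 0} / measure Ms {\<omega>\<in>space Ms. Xs \<omega> \<le> 0}
          = measure M {\<omega>\<in>space M. Y \<omega> \<le> y \<and> X \<omega> = 0} / measure M {\<omega>\<in>space M. X \<omega> = 0})"
proof -
  interpret M: prob_space M by (rule P)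
  interpret Ms: prob_space Ms by (rule Ps)
  note [measurable] = X_rv Y_rv Y0_rv Xs_rv Ys_rv
  define g where "g y x = genInv \<phi> (y - sstar x)" for y x
  have sstar_cont: "continuous_on UNIV sstar"
    using analytic_isCont[OF A6_ii_ext] by (simp add: continuous_at_imp_continuous_on)
  have g_meas[measurable]: "g y \<in> borel_measurable borel" for y
  proof -
    have A: "genInv \<phi> \<in> borel_measurable borel" by (rule borel_measurable_mono[OF gi_mono[OF A6_iii_mono]])
    have B: "(\<lambda>x. y - sstar x) \<in> borel_measurable borel"
      by (intro borel_measurable_continuous_onI continuous_intros sstar_cont)
    show ?thesis using measurable_compose[OF B A] unfolding g_def .
  qed
  have h_meas[measurable]: "h \<in> borel_measurable borel"
    by (rule borel_measurable_continuous_onI[OF h_cont])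
  have g_nn: "0 \<le> g y x" "g y x \<le> 1" for y x
    unfolding g_def using gi_bounds[OF A6_iii_mono] by auto
  have K: "(\<integral>\<^sup>+ x. ennreal (g y x * h x) * indicator {..0} x \<partial>lborel)
      = emeasure M {\<omega>\<in>space M. Y0 \<omega> \<le> y \<and> X \<omega> = 0}" for y
  proof -
    let ?L = "\<integral>\<^sup>+ x. ennreal (g y x * h x) * indicator {..0} x \<partial>lborel"
    let ?R = "\<integral>\<^sup>+ x. ennreal (g y x * h x) * indicator {0<..} x \<partial>lborel"
    have split: "(\<integral>\<^sup>+ x. ennreal (g y x * h x) \<partial>lborel) = ?L + ?R"
      by (subst nn_integral_add[symmetric]) (auto intro!: nn_integral_cong split: split_indicator)
    have pos: "?R = emeasure M {\<omega>\<in>space M. X \<omega> \<in> {0<..} \<and> Y0 \<omega> \<le> y}"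
    proof -
      have "?R = (\<integral>\<^sup>+ x\<in>{0<..}. ennreal (Fc x y * fX x) \<partial>lborel)"
      proof (intro nn_integral_cong)
        fix x :: real
        show "ennreal (g y x * h x) * indicator {0<..} x = ennreal (Fc x y * fX x) * indicator {0<..} x"
        proof (cases "x > 0")
          case True
          then have "Fc x y = genInv \<phi> (y - s x)"
            using Fc_eq[of "Fc x" "s x" \<phi> y] Fc_cdf A6_i by auto
          then show ?thesis using True A6_ii_eq h_fX unfolding g_def by simp
        qed simp
      qed
      also have "\<dots> = emeasure M {\<omega>\<in>space M. X \<omega> \<in> {0<..} \<and> Y0 \<omega> \<le> y}"
        using Fc_cond[rule_format, of "{0<..}" y] by simp
      finally show ?thesis .
    qed
    have tot: "emeasure M {\<omega>\<in>space M. Y0 \<omega> \<le> y} = emeasure M {\<omega>\<in>space M. Y0 \<omega> \<le> y \<and> X \<omega> = 0}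
        + emeasure M {\<omega>\<in>space M. X \<omega> \<in> {0<..} \<and> Y0 \<omega> \<le> y}"
    proof -
      have "{\<omega> \<in> space M. Y0 \<omega> \<le> y} = {\<omega> \<in> space M. Y0 \<omega> \<le> y \<and> X \<omega> = 0} \<union> {\<omega> \<in> space M. X \<omega> \<in> {0<..} \<and> Y0 \<omega> \<le> y}"
        using X_nonneg by force
      moreover have "emeasure M {\<omega> \<in> space M. Y0 \<omega> \<le> y \<and> X \<omega> = 0} + emeasure M {\<omega> \<in> space M. X \<omega> \<in> {0<..} \<and> Y0 \<omega> \<le> y}
         = emeasure M ({\<omega> \<in> space M. Y0 \<omega> \<le> y \<and> X \<omega> = 0} \<union> {\<omega> \<in> space M. X \<omega> \<in> {0<..} \<and> Y0 \<omega> \<le> y})"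
        by (rule plus_emeasure) auto
      ultimately show ?thesis by simp
    qed
    have "?L + ?R = emeasure M {\<omega>\<in>space M. Y0 \<omega> \<le> y \<and> X \<omega> = 0} + ?R"
      using A6_iii[rule_format, of y] split tot pos M.emeasure_eq_measure by (simp add: g_def)
    moreover have "?R \<noteq> \<infinity>" using pos M.emeasure_finite by simp
    ultimately show ?thesis using ennreal_add_left_cancel[of ?R] by (simp add: add.commute)
  qed
  have Hall: "(\<integral>\<^sup>+ x. ennreal (h x) * indicator {..0} x \<partial>lborel) = emeasure M {\<omega>\<in>space M. X \<omega> = 0}"
  proof -
    have "(\<integral>\<^sup>+ x. ennreal (h x) * indicator {..0} x \<partial>lborel)
        = (\<integral>\<^sup>+ x. (SUP n. ennreal (g (real n) x * h x) * indicator {..0} x) \<partial>lborel)"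
    proof (intro nn_integral_cong)
      fix x
      have "(SUP n. ennreal (g (real n) x * h x) * indicator {..0} x)
          = (SUP n. ennreal (genInv \<phi> (real n - sstar x))) * ennreal (h x) * indicator {..0} x"
        unfolding g_def SUP_mult_right_ennreal
        using gi_bounds[OF A6_iii_mono] h_nonneg by (simp add: ennreal_mult)
      then show "ennreal (h x) * indicator {..0} x = (SUP n. ennreal (g (real n) x * h x) * indicator {..0} x)"
        using gi_SUP[OF A6_iii_mono] by simp
    qed
    also have "\<dots> = (SUP n. \<integral>\<^sup>+ x. ennreal (g (real n) x * h x) * indicator {..0} x \<partial>lborel)"
    proof (rule nn_integral_monotone_convergence_SUP)
      show "incseq (\<lambda>n x. ennreal (g (real n) x * h x) * indicator {..0::real} x)"
      proof (intro incseq_SucI le_funI)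
        fix n x
        have "g (real n) x \<le> g (real (Suc n)) x"
          unfolding g_def by (intro monoD[OF gi_mono[OF A6_iii_mono]]) simp
        then show "ennreal (g (real n) x * h x) * indicator {..0::real} x \<le> ennreal (g (real (Suc n)) x * h x) * indicator {..0} x"
          using h_nonneg by (intro mult_right_mono ennreal_leI mult_right_mono) auto
      qed
    qed simp
    also have "\<dots> = (SUP n. emeasure M {\<omega>\<in>space M. Y0 \<omega> \<le> real n \<and> X \<omega> = 0})"
      using K by simp
    also have "\<dots> = emeasure M (\<Union>n. {\<omega>\<in>space M. Y0 \<omega> \<le> real n \<and> X \<omega> = 0})"
      by (rule SUP_emeasure_incseq) (auto simp: incseq_def intro: order_trans)
    also have "(\<Union>n. {\<omega>\<in>space M. Y0 \<omega> \<le> real n \<and> X \<omega> = 0}) = {\<omega>\<in>space M. X \<omega> = 0}"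
    proof safe
      fix \<omega> assume "\<omega> \<in> space M" "X \<omega> = 0"
      obtain n :: nat where "Y0 \<omega> \<le> real n" using real_arch_simple by blast
      then show "\<omega> \<in> (\<Union>n. {\<omega>\<in>space M. Y0 \<omega> \<le> real n \<and> X \<omega> = 0})"
        using \<open>\<omega> \<in> space M\<close> \<open>X \<omega> = 0\<close> by auto
    qed
    finally show ?thesis .
  qed
  have X0: "{\<omega>\<in>space M. X \<omega> \<le> 0} = {\<omega>\<in>space M. X \<omega> = 0}"
    using X_nonneg by force
  have part1: "measure Ms {\<omega>\<in>space Ms. Xs \<omega> \<le> 0} = measure M {\<omega>\<in>space M. X \<omega> = 0}"
    using Xs_cdf_nonneg X0 by auto
  let ?D = "distr Ms borel Xs"
  have Dmeas: "density ?D (indicator {..0}) = density lborel (\<lambda>x. ennreal (h x) * indicator {..0} x)"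
  proof (rule measure_eqI_generator_eq[where \<Omega>=UNIV and E="range atMost" and A="\<lambda>i. {..real i}"])
    show "Int_stable (range (atMost :: real \<Rightarrow> real set))"
      by (auto simp: Int_stable_def)
    show "range (atMost :: real \<Rightarrow> real set) \<subseteq> Pow UNIV" by simp
    show "sets (density ?D (indicator {..0})) = sigma_sets UNIV (range atMost)"
      using sets_borel_atMost by simp
    show "sets (density lborel (\<lambda>x. ennreal (h x) * indicator {..0} x)) = sigma_sets UNIV (range atMost)"
      using sets_borel_atMost by simp
    show "range (\<lambda>i. {..real i}) \<subseteq> range atMost" by auto
    show "(\<Union>i. {..real i}) = UNIV"
      using real_arch_simple by auto
    have LHS: "emeasure (density ?D (indicator {..0})) {..a} = emeasure Ms {\<omega>\<in>space Ms. Xs \<omega> \<le> min a 0}" for a :: real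
    proof -
      have "emeasure (density ?D (indicator {..0})) {..a} = (\<integral>\<^sup>+ x. indicator {..0} x * indicator {..a} x \<partial>?D)"
        by (rule emeasure_density) auto
      also have "\<dots> = (\<integral>\<^sup>+ x. indicator {..min a 0} x \<partial>?D)"
        by (rule nn_integral_cong) (auto split: split_indicator)
      also have "\<dots> = emeasure ?D {..min a 0}" by (rule nn_integral_indicator) simp
      also have "\<dots> = emeasure Ms {\<omega>\<in>space Ms. Xs \<omega> \<le> min a 0}"
        by (subst emeasure_distr) (auto intro!: arg_cong[where f="emeasure Ms"])
      finally show ?thesis .
    qed
    show "emeasure (density ?D (indicator {..0})) {..real i} \<noteq> \<infinity>" for i
      using LHS Ms.emeasure_finite by simp
    fix A assume "A \<in> range (atMost :: real \<Rightarrow> real set)"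
    then obtain a where A: "A = {..a}" by auto
    have RHS: "emeasure (density lborel (\<lambda>x. ennreal (h x) * indicator {..0} x)) {..a}
        = (\<integral>\<^sup>+ x. ennreal (h x) * indicator {..0} x * indicator {..a} x \<partial>lborel)"
      by (subst emeasure_density) auto
    show "emeasure (density ?D (indicator {..0})) A = emeasure (density lborel (\<lambda>x. ennreal (h x) * indicator {..0} x)) A"
    proof (cases "a < 0")
      case True
      then have "emeasure (density ?D (indicator {..0})) A = (\<integral>\<^sup>+ t\<in>{..a}. ennreal (h t) \<partial>lborel)"
        using LHS[of a] Xs_cdf_neg[rule_format, of a] A by (simp add: min_def)
      also have "\<dots> = (\<integral>\<^sup>+ x. ennreal (h x) * indicator {..0} x * indicator {..a} x \<partial>lborel)"
        using True by (intro nn_integral_cong) (auto split: split_indicator)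
      finally show ?thesis using RHS A by simp
    next
      case False
      then have "emeasure (density ?D (indicator {..0})) A = emeasure Ms {\<omega>\<in>space Ms. Xs \<omega> \<le> 0}"
        using LHS[of a] A False by (simp add: min_def)
      also have "\<dots> = emeasure M {\<omega>\<in>space M. X \<omega> = 0}"
        using part1 Ms.emeasure_eq_measure M.emeasure_eq_measure by simp
      also have "\<dots> = (\<integral>\<^sup>+ x. ennreal (h x) * indicator {..0} x * indicator {..a} x \<partial>lborel)"
        unfolding Hall[symmetric] using False by (intro nn_integral_cong) (auto split: split_indicator)
      finally show ?thesis using RHS A by simp
    qed
  qed
  have part2: "measure Ms {\<omega>\<in>space Ms. Ys \<omega> \<le> y \<and> Xs \<omega> \<le> 0} = measure M {\<omega>\<in>space M. Y \<omega> \<le> y \<and> X \<omega> = 0}" for y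
  proof -
    have "emeasure Ms {\<omega>\<in>space Ms. Ys \<omega> \<le> y \<and> Xs \<omega> \<le> 0} = emeasure Ms {\<omega>\<in>space Ms. Xs \<omega> \<in> {..0} \<and> Ys \<omega> \<le> y}"
      by (auto intro!: arg_cong[where f="emeasure Ms"])
    also have "\<dots> = (\<integral>\<^sup>+ x. indicator {..0} x * ennreal (g y x) \<partial>?D)"
      using Ys_cond[rule_format, of "{..0}" y] unfolding g_def by (simp add: mult.commute)
    also have "\<dots> = (\<integral>\<^sup>+ x. ennreal (g y x) \<partial>density ?D (indicator {..0}))"
      by (subst nn_integral_density) auto
    also have "\<dots> = (\<integral>\<^sup>+ x. ennreal (g y x) \<partial>density lborel (\<lambda>x. ennreal (h x) * indicator {..0} x))"
      using Dmeas by simp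
    also have "\<dots> = (\<integral>\<^sup>+ x. ennreal (h x) * indicator {..0} x * ennreal (g y x) \<partial>lborel)"
      by (subst nn_integral_density) auto
    also have "\<dots> = (\<integral>\<^sup>+ x. ennreal (g y x * h x) * indicator {..0} x \<partial>lborel)"
      using g_nn h_nonneg by (intro nn_integral_cong) (simp add: ennreal_mult mult_ac)
    also have "\<dots> = emeasure M {\<omega>\<in>space M. Y0 \<omega> \<le> y \<and> X \<omega> = 0}" by (rule K)
    also have "\<dots> = emeasure M {\<omega>\<in>space M. Y \<omega> \<le> y \<and> X \<omega> = 0}"
      using Y_obs by (auto intro!: arg_cong[where f="emeasure M"])
    finally show ?thesis
      using Ms.emeasure_eq_measure M.emeasure_eq_measure by simp
  qed
  show ?thesis using part1 part2 by simp
qed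

end
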